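(* For every $\varepsilon>0$ there exists a two-player protocol for the problem Max-Card-$k$ (in the two-player model described in the context) with an approximation guarantee of $\frac{2}{3}-\varepsilon$ whose communication complexity is $\widetilde{O}(k/\varepsilon)$ elements. Moreover, there exists such a protocol achieving an approximation guarantee of $\frac{2}{3}$ whose communication complexity is $O(k^2)$ elements.
   Context: Two-player model for Max-Card-$k$. The global information known to both players consists of a positive integer $k$, a finite ground set $W$, and a partition $W=W_A\,\dot\cup\, W_B$. Alice privately receives a set $V_A\subseteq W_A$ and Bob privately receives a set $V_B\subseteq W_B$. There is a non-negative, monotone, submodular function $f:2^W\to\mathbb{R}_{\ge 0}$; Alice can query $f$ (via a value oracle) only on subsets of $W_A$, while Bob can query $f$ on any subset of $W$. A protocol consists of two possibly randomized algorithms: Alice's algorithm computes a message $m$ from the global information, $V_A$ and her oracle; then Bob's algorithm computes an output set $S\subseteq V_A\cup V_B$ with $|S|\le k$ from the global information, $V_B$, $m$ and his oracle. The communication complexity is the maximum length of $m$ over all inputs and the randomness; when the message consists of elements of $W$, it is measured in elements (number of elements of $W$ in $m$). The protocol has approximation guarantee $\rho$ if for every instance $\mathbb{E}[f(S)]\ge \rho\cdot\max\{f(T): T\subseteq V_A\cup V_B,\ |T|\le k\}$. A monotone submodular $f$ means $f(X)\le f(Y)$ for $X\subseteq Y$ and $f(X\cup\{v\})-f(X)\ge f(Y\cup\{v\})-f(Y)$ for $X\subseteq Y\subseteq W$, $v\notin Y$. $\widetilde{O}$ suppresses poly-logarithmic factors. No bound on computation time is required. *)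

theory Defs
  imports "HOL-Probability.Probability"
begin

text \<open>The ground set W is a finite set of naturals
(without loss of generality). Global information: k, W, W_A, W_B.
Alice: (k, W, W_A, W_B, V_A, oracle f) \<mapsto> random message (list of elements of W).
Bob:   (k, W, W_A, W_B, V_B, message, oracle f) \<mapsto> random output set.
Oracle access is modelled by requiring that Alice's output distribution depends on f only
through its values on subsets of W_A, and Bob's only through its values on subsets of W.
The two parties use independent private randomness.\<close>

type_synonym alice_alg =
  "nat \<Rightarrow> nat set \<Rightarrow> nat set \<Rightarrow> nat set \<Rightarrow> nat set \<Rightarrow> (nat set \<Rightarrow> real) \<Rightarrow> nat list pmf"

type_synonym bob_alg =
  "nat \<Rightarrow> nat set \<Rightarrow> nat set \<Rightarrow> nat set \<Rightarrow> nat set \<Rightarrow> nat list \<Rightarrow> (nat set \<Rightarrow> real) \<Rightarrow> nat set pmf"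

definition nonneg_monotone_submodular :: "nat set \<Rightarrow> (nat set \<Rightarrow> real) \<Rightarrow> bool" where
  "nonneg_monotone_submodular W f \<longleftrightarrow>
     (\<forall>X. X \<subseteq> W \<longrightarrow> f X \<ge> 0) \<and>
     (\<forall>X Y. X \<subseteq> Y \<and> Y \<subseteq> W \<longrightarrow> f X \<le> f Y) \<and>
     (\<forall>X Y v. X \<subseteq> Y \<and> Y \<subseteq> W \<and> v \<in> W \<and> v \<notin> Y \<longrightarrow>
        f (insert v X) - f X \<ge> f (insert v Y) - f Y)"

definition valid_instance ::
  "nat \<Rightarrow> nat set \<Rightarrow> nat set \<Rightarrow> nat set \<Rightarrow> nat set \<Rightarrow> nat set \<Rightarrow> (nat set \<Rightarrow> real) \<Rightarrow> bool" where
  "valid_instance k W WA WB VA VB f \<longleftrightarrow>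
     k > 0 \<and> finite W \<and> WA \<union> WB = W \<and> WA \<inter> WB = {} \<and>
     VA \<subseteq> WA \<and> VB \<subseteq> WB \<and> nonneg_monotone_submodular W f"

definition alice_oracle_ok :: "alice_alg \<Rightarrow> bool" where
  "alice_oracle_ok alice \<longleftrightarrow>
     (\<forall>k W WA WB VA f g. (\<forall>X. X \<subseteq> WA \<longrightarrow> f X = g X) \<longrightarrow>
        alice k W WA WB VA f = alice k W WA WB VA g)"

definition bob_oracle_ok :: "bob_alg \<Rightarrow> bool" where
  "bob_oracle_ok bob \<longleftrightarrow>
     (\<forall>k W WA WB VB m f g. (\<forall>X. X \<subseteq> W \<longrightarrow> f X = g X) \<longrightarrow>
        bob k W WA WB VB m f = bob k W WA WB VB m g)"

definition protocol_output ::
  "alice_alg \<Rightarrow> bob_alg \<Rightarrow> nat \<Rightarrow> nat set \<Rightarrow> nat set \<Rightarrow> nat set \<Rightarrow> nat set \<Rightarrow> nat set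
     \<Rightarrow> (nat set \<Rightarrow> real) \<Rightarrow> nat set pmf" where
  "protocol_output alice bob k W WA WB VA VB f =
     bind_pmf (alice k W WA WB VA f) (\<lambda>m. bob k W WA WB VB m f)"

definition opt_value :: "nat \<Rightarrow> nat set \<Rightarrow> (nat set \<Rightarrow> real) \<Rightarrow> real" where
  "opt_value k V f = Max (f ` {T. T \<subseteq> V \<and> card T \<le> k})"

definition is_protocol :: "alice_alg \<Rightarrow> bob_alg \<Rightarrow> bool" where
  "is_protocol alice bob \<longleftrightarrow>
     alice_oracle_ok alice \<and> bob_oracle_ok bob \<and>
     (\<forall>k W WA WB VA VB f. valid_instance k W WA WB VA VB f \<longrightarrow>
        (\<forall>S \<in> set_pmf (protocol_output alice bob k W WA WB VA VB f).
            S \<subseteq> VA \<union> VB \<and> card S \<le> k))"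

definition approx_guarantee :: "alice_alg \<Rightarrow> bob_alg \<Rightarrow> real \<Rightarrow> bool" where
  "approx_guarantee alice bob \<rho> \<longleftrightarrow>
     (\<forall>k W WA WB VA VB f. valid_instance k W WA WB VA VB f \<longrightarrow>
        measure_pmf.expectation (protocol_output alice bob k W WA WB VA VB f) f
          \<ge> \<rho> * opt_value k (VA \<union> VB) f)"

definition comm_bounded :: "alice_alg \<Rightarrow> (nat \<Rightarrow> real) \<Rightarrow> bool" where
  "comm_bounded alice B \<longleftrightarrow>
     (\<forall>k W WA WB VA VB f. valid_instance k W WA WB VA VB f \<longrightarrow>
        (\<forall>m \<in> set_pmf (alice k W WA WB VA f). set m \<subseteq> W \<and> real (length m) \<le> B k))"

end

theory Submission
  imports Defs
begin

context
  fixes W :: "nat set" and f :: "nat set \<Rightarrow> real"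
  assumes nms: "nonneg_monotone_submodular W f"
begin

lemma nms_nonneg: "X \<subseteq> W \<Longrightarrow> f X \<ge> 0"
  using nms unfolding nonneg_monotone_submodular_def by blast

lemma nms_mono: "X \<subseteq> Y \<Longrightarrow> Y \<subseteq> W \<Longrightarrow> f X \<le> f Y"
  using nms unfolding nonneg_monotone_submodular_def by blast

lemma nms_elem: "X \<subseteq> Y \<Longrightarrow> Y \<subseteq> W \<Longrightarrow> v \<in> W \<Longrightarrow> v \<notin> Y \<Longrightarrow>
   f (insert v Y) - f Y \<le> f (insert v X) - f X"
  using nms unfolding nonneg_monotone_submodular_def by blast

lemma nms_diff:
  assumes "finite D" shows "Z \<subseteq> Y \<Longrightarrow> Y \<union> D \<subseteq> W \<Longrightarrow> D \<inter> Y = {} \<Longrightarrow>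
     f (Y \<union> D) - f Y \<le> f (Z \<union> D) - f Z"
  using assms
proof (induction D rule: finite_induct)
  case empty then show ?case by simp
next
  case (insert d D)
  have IH: "f (Y \<union> D) - f Y \<le> f (Z \<union> D) - f Z" using insert by auto
  have "f (insert d (Y \<union> D)) - f (Y \<union> D) \<le> f (insert d (Z \<union> D)) - f (Z \<union> D)"
    by (rule nms_elem) (use insert in auto)
  then show ?case using IH by simp
qed

lemma nms_lattice:
  assumes "finite W" "X \<subseteq> W" "Y \<subseteq> W"
  shows "f (X \<union> Y) + f (X \<inter> Y) \<le> f X + f Y"
proof -
  have "f (Y \<union> (X - Y)) - f Y \<le> f ((X \<inter> Y) \<union> (X - Y)) - f (X \<inter> Y)"
    by (rule nms_diff) (use assms in \<open>auto intro: finite_subset\<close>)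
  moreover have "Y \<union> (X - Y) = X \<union> Y" "(X \<inter> Y) \<union> (X - Y) = X" by auto
  ultimately show ?thesis by simp
qed

lemma sum_marg:
  assumes "finite Q" shows "Q \<subseteq> W \<Longrightarrow> (\<Sum>x\<in>Q. f Q - f (Q - {x})) \<le> f Q - f {}"
  using assms
proof (induction Q rule: finite_induct)
  case empty then show ?case by simp
next
  case (insert y Z)
  have "(\<Sum>x\<in>Z. f (insert y Z) - f (insert y Z - {x})) \<le> (\<Sum>x\<in>Z. f Z - f (Z - {x}))"
  proof (rule sum_mono)
    fix x assume x: "x \<in> Z"
    have e1: "insert y Z = insert x (insert y (Z - {x}))" "insert y Z - {x} = insert y (Z - {x})"
      using x insert by auto
    have e2: "Z = insert x (Z - {x})" using x by auto
    have "f (insert x (insert y (Z - {x}))) - f (insert y (Z - {x})) \<le> f (insert x (Z - {x})) - f (Z - {x})"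
      by (rule nms_elem) (use insert x in auto)
    then show "f (insert y Z) - f (insert y Z - {x}) \<le> f Z - f (Z - {x})"
      using e1 e2 by metis
  qed
  moreover have "(\<Sum>x\<in>insert y Z. f (insert y Z) - f (insert y Z - {x}))
     = (f (insert y Z) - f Z) + (\<Sum>x\<in>Z. f (insert y Z) - f (insert y Z - {x}))"
    using insert by simp
  moreover have "(\<Sum>x\<in>Z. f Z - f (Z - {x})) \<le> f Z - f {}" using insert by auto
  ultimately show ?case by linarith
qed

lemma drop1:
  assumes "finite Q" "Q \<subseteq> W" "Q \<noteq> {}"
  shows "\<exists>x\<in>Q. real (card Q) * f (Q - {x}) \<ge> real (card Q - 1) * f Q"
proof (rule ccontr)
  assume "\<not> ?thesis"
  hence H: "\<forall>x\<in>Q. real (card Q) * f (Q - {x}) < real (card Q - 1) * f Q" by auto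
  have n: "card Q > 0" using assms by (simp add: card_gt_0_iff)
  have "(\<Sum>x\<in>Q. f Q / real (card Q)) < (\<Sum>x\<in>Q. f Q - f (Q - {x}))"
  proof (rule sum_strict_mono)
    fix x assume "x \<in> Q"
    hence "real (card Q) * f (Q - {x}) < real (card Q - 1) * f Q" using H by auto
    also have "\<dots> = real (card Q) * f Q - f Q" using n by (simp add: of_nat_diff algebra_simps)
    finally have "real (card Q) * (f Q / real (card Q)) < real (card Q) * (f Q - f (Q - {x}))"
      using n by (simp add: algebra_simps)
    then have "f Q / real (card Q) < f Q - f (Q - {x})" using n
      by (subst mult_less_cancel_left_pos[symmetric, of "real (card Q)"]) auto
    then show "f Q / real (card Q) < f Q - f (Q - {x})" .
  qed (use assms in auto)
  also have "\<dots> \<le> f Q - f {}" using sum_marg assms by auto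
  also have "\<dots> \<le> f Q" using nms_nonneg by auto
  finally show False using n by simp
qed

lemma dropj:
  assumes "finite Q" "Q \<subseteq> W"
  shows "j \<le> card Q \<Longrightarrow> \<exists>Q'\<subseteq>Q. card Q' = card Q - j \<and>
            real (card Q) * f Q' \<ge> real (card Q - j) * f Q"
proof (induction j)
  case 0 then show ?case by auto
next
  case (Suc j)
  then obtain Q' where Q': "Q' \<subseteq> Q" "card Q' = card Q - j"
     "real (card Q) * f Q' \<ge> real (card Q - j) * f Q" by auto
  have fin: "finite Q'" using finite_subset[OF _ assms(1)] Q'(1) by blast
  have ne: "Q' \<noteq> {}" using Q' Suc.prems by auto
  obtain x where x: "x \<in> Q'" "real (card Q') * f (Q' - {x}) \<ge> real (card Q' - 1) * f Q'"
    using drop1[OF fin _ ne] Q' assms by blast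
  define c where "c = card Q - j"
  have c: "c > 0" using Suc.prems c_def by simp
  have cc: "real (card Q' - 1) = real c - 1" using Q' c c_def by (simp add: of_nat_diff)
  have fO: "f Q \<ge> 0" using nms_nonneg assms by auto
  have x': "(real c - 1) * f Q' \<le> real c * f (Q' - {x})"
    using x(2) cc Q'(2) c_def by metis
  have "real c * (real (card Q) * f (Q' - {x})) = real (card Q) * (real c * f (Q' - {x}))"
    by simp
  also have "\<dots> \<ge> real (card Q) * ((real c - 1) * f Q')"
    using x' by (intro mult_left_mono) auto
  also have "real (card Q) * ((real c - 1) * f Q') = (real c - 1) * (real (card Q) * f Q')" by simp
  also have "\<dots> \<ge> (real c - 1) * (real c * f Q)"
    using Q' c c_def by (intro mult_left_mono) auto
  finally have "real c * (real (card Q) * f (Q' - {x})) \<ge> real c * ((real c - 1) * f Q)"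
    by (simp add: algebra_simps)
  hence "real (card Q) * f (Q' - {x}) \<ge> (real c - 1) * f Q" using c
    by (simp add: mult_le_cancel_left_pos)
  moreover have "real c - 1 = real (card Q - Suc j)" using c c_def Suc.prems by (simp add: of_nat_diff)
  moreover have "card (Q' - {x}) = card Q - Suc j" using x fin Q' by simp
  ultimately show ?case using Q' by (intro exI[of _ "Q' - {x}"]) auto
qed

end

definition best :: "nat set \<Rightarrow> nat \<Rightarrow> (nat set \<Rightarrow> real) \<Rightarrow> nat set" where
  "best V a h = (SOME X. X \<subseteq> V \<and> card X \<le> a \<and> (\<forall>Y. Y \<subseteq> V \<and> card Y \<le> a \<longrightarrow> h Y \<le> h X))"

lemma best_spec:
  assumes "finite V"
  shows "best V a h \<subseteq> V \<and> card (best V a h) \<le> a \<and>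
         (\<forall>Y. Y \<subseteq> V \<and> card Y \<le> a \<longrightarrow> h Y \<le> h (best V a h))"
proof -
  let ?C = "{X. X \<subseteq> V \<and> card X \<le> a}"
  have fin: "finite ?C" proof (rule finite_subset[of _ "Pow V"])
    show "finite (Pow V)" using assms by simp
  qed auto
  have ne: "?C \<noteq> {}" by (auto intro: exI[of _ "{}"])
  have "Max (h ` ?C) \<in> h ` ?C" using fin ne by (intro Max_in) auto
  then obtain X where X: "X \<in> ?C" "h X = Max (h ` ?C)" by auto
  have "h Y \<le> h X" if "Y \<subseteq> V" "card Y \<le> a" for Y
  proof -
    have "h Y \<in> h ` ?C" using that by blast
    then have "h Y \<le> Max (h ` ?C)" using fin by (intro Max_ge) auto
    then show ?thesis using X(2) by simp
  qed
  then have "\<exists>X. X \<subseteq> V \<and> card X \<le> a \<and> (\<forall>Y. Y \<subseteq> V \<and> card Y \<le> a \<longrightarrow> h Y \<le> h X)"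
    using X(1) by blast
  then show ?thesis unfolding best_def by (rule someI_ex)
qed

lemma best_cong:
  assumes "\<And>Y. Y \<subseteq> V \<Longrightarrow> h Y = h' Y"
  shows "best V a h = best V a h'"
proof -
  have "(\<lambda>X. X \<subseteq> V \<and> card X \<le> a \<and> (\<forall>Y. Y \<subseteq> V \<and> card Y \<le> a \<longrightarrow> h Y \<le> h X)) =
        (\<lambda>X. X \<subseteq> V \<and> card X \<le> a \<and> (\<forall>Y. Y \<subseteq> V \<and> card Y \<le> a \<longrightarrow> h' Y \<le> h' X))"
    using assms by (intro ext) auto
  then show ?thesis unfolding best_def by simp
qed

definition S1 :: "nat set \<Rightarrow> nat \<Rightarrow> (nat set \<Rightarrow> real) \<Rightarrow> nat set" where
  "S1 V a f = best V a f"

definition S2 :: "nat set \<Rightarrow> nat \<Rightarrow> (nat set \<Rightarrow> real) \<Rightarrow> nat set" where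
  "S2 V a f = best V a (\<lambda>X. f ((S1 V a f \<inter> V) \<union> X))"

definition msgset :: "nat \<Rightarrow> nat \<Rightarrow> nat set \<Rightarrow> (nat set \<Rightarrow> real) \<Rightarrow> nat set" where
  "msgset s k V f = (\<Union>i\<in>{1..k div s}. S1 V (s * i) f \<union> S2 V (s * i) f)"

definition alice_gen :: "(nat \<Rightarrow> nat) \<Rightarrow> alice_alg" where
  "alice_gen sf k W WA WB VA f = return_pmf (sorted_list_of_set (msgset (sf k) k (VA \<inter> WA) f))"

definition bob0 :: bob_alg where
  "bob0 k W WA WB VB m f = return_pmf (best ((set m \<union> VB) \<inter> W) k f)"

lemma two_thirds:
  assumes nms: "nonneg_monotone_submodular W f" and fW: "finite W" and VW: "V \<subseteq> W"
    and A: "A \<subseteq> V" "card A \<le> a" and B: "B \<subseteq> W"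
    and t1: "f (S1 V a f \<union> B) \<le> t" and t2: "f (S2 V a f \<union> B) \<le> t"
  shows "2 * f (A \<union> B) \<le> 3 * t"
proof -
  have fV: "finite V" by (rule finite_subset[OF VW fW])
  define P where "P = S1 V a f"
  define R where "R = S2 V a f"
  have P: "P \<subseteq> V" "\<forall>Y. Y \<subseteq> V \<and> card Y \<le> a \<longrightarrow> f Y \<le> f P"
    using best_spec[OF fV, of a f] unfolding P_def S1_def by auto
  have R: "R \<subseteq> V" "\<forall>Y. Y \<subseteq> V \<and> card Y \<le> a \<longrightarrow> f ((P \<inter> V) \<union> Y) \<le> f ((P \<inter> V) \<union> R)"
    using best_spec[OF fV, of a "\<lambda>X. f ((P \<inter> V) \<union> X)"] unfolding R_def S2_def P_def by auto
  have PV: "P \<inter> V = P" using P by auto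
  have sub: "P \<subseteq> W" "R \<subseteq> W" "A \<subseteq> W" using P R A VW by auto
  have e1: "f ((P \<union> B) \<union> (R \<union> B)) + f ((P \<union> B) \<inter> (R \<union> B)) \<le> f (P \<union> B) + f (R \<union> B)"
    using nms_lattice[OF nms fW] sub B by auto
  have e1b: "f B \<le> f ((P \<union> B) \<inter> (R \<union> B))" by (rule nms_mono[OF nms]) (use sub B in auto)
  have e2: "f (P \<union> R) \<le> f ((P \<union> B) \<union> (R \<union> B))" by (rule nms_mono[OF nms]) (use sub B in auto)
  have e2b: "f (P \<union> A) \<le> f (P \<union> R)" using R(2) A PV by auto
  have e3: "f ((P \<union> A) \<union> (P \<union> B)) + f ((P \<union> A) \<inter> (P \<union> B)) \<le> f (P \<union> A) + f (P \<union> B)"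
    using nms_lattice[OF nms fW] sub B by auto
  have e3b: "f (A \<union> B) \<le> f ((P \<union> A) \<union> (P \<union> B))" by (rule nms_mono[OF nms]) (use sub B in auto)
  have e3c: "f P \<le> f ((P \<union> A) \<inter> (P \<union> B))" by (rule nms_mono[OF nms]) (use sub B in auto)
  have e4: "f A \<le> f P" using P A by auto
  have e5: "f (A \<union> B) + f (A \<inter> B) \<le> f A + f B" using nms_lattice[OF nms fW] sub B by auto
  have e5b: "0 \<le> f (A \<inter> B)" by (rule nms_nonneg[OF nms]) (use sub in auto)
  show ?thesis using e1 e1b e2 e2b e3 e3b e3c e4 e5 e5b t1 t2 unfolding P_def R_def by linarith
qed


lemma msgset_sub:
  assumes "finite V" shows "msgset s k V f \<subseteq> V"
  using best_spec[OF assms] unfolding msgset_def S1_def S2_def by blast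

lemma msgset_card:
  assumes "finite V" "s \<ge> 1"
  shows "card (msgset s k V f) \<le> 2 * k * (k div s)"
proof -
  have "card (msgset s k V f) \<le> (\<Sum>i\<in>{1..k div s}. card (S1 V (s * i) f \<union> S2 V (s * i) f))"
    unfolding msgset_def by (rule card_UN_le) simp
  also have "\<dots> \<le> (\<Sum>i\<in>{1..k div s}. 2 * k)"
  proof (rule sum_mono)
    fix i assume i: "i \<in> {1..k div s}"
    have "s * i \<le> s * (k div s)" using i by simp
    also have "\<dots> \<le> k" by simp
    finally have si: "s * i \<le> k" .
    have "card (S1 V (s * i) f \<union> S2 V (s * i) f) \<le> card (S1 V (s * i) f) + card (S2 V (s * i) f)"
      by (rule card_Un_le)
    also have "\<dots> \<le> s * i + s * i"
      using best_spec[OF assms(1)] unfolding S1_def S2_def by (meson add_mono)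
    finally show "card (S1 V (s * i) f \<union> S2 V (s * i) f) \<le> 2 * k" using si by linarith
  qed
  also have "\<dots> = 2 * k * (k div s)" by simp
  finally show ?thesis .
qed

lemma msgset_oracle:
  assumes "V \<subseteq> WA" "\<forall>X. X \<subseteq> WA \<longrightarrow> f X = g X"
  shows "msgset s k V f = msgset s k V g"
proof -
  have e1: "S1 V a f = S1 V a g" for a
    unfolding S1_def by (rule best_cong) (use assms in auto)
  have e2: "S2 V a f = S2 V a g" for a
    unfolding S2_def e1
  proof (rule best_cong)
    fix Y assume "Y \<subseteq> V"
    hence "S1 V a g \<inter> V \<union> Y \<subseteq> WA" using assms(1) by blast
    thus "f (S1 V a g \<inter> V \<union> Y) = g (S1 V a g \<inter> V \<union> Y)" using assms(2) by blast
  qed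
  show ?thesis unfolding msgset_def e1 e2 ..
qed

lemma alice_ok: "alice_oracle_ok (alice_gen sf)"
  unfolding alice_oracle_ok_def alice_gen_def
  by (metis Int_lower2 msgset_oracle)

lemma bob_ok: "bob_oracle_ok bob0"
  unfolding bob_oracle_ok_def bob0_def
  by (auto intro!: arg_cong[where f="return_pmf"] best_cong)

lemma output_eq:
  assumes "valid_instance k W WA WB VA VB f"
  shows "protocol_output (alice_gen sf) bob0 k W WA WB VA VB f =
         return_pmf (best ((msgset (sf k) k VA f \<union> VB) \<inter> W) k f)"
proof -
  have vi: "finite W" "VA \<subseteq> W" "VA \<subseteq> WA" using assms unfolding valid_instance_def by auto
  have fA: "finite VA" "VA \<inter> WA = VA" using finite_subset[OF vi(2) vi(1)] vi(3) by auto
  have "finite (msgset (sf k) k VA f)" by (rule finite_subset[OF msgset_sub[OF fA(1)] fA(1)])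
  then show ?thesis unfolding protocol_output_def alice_gen_def bob0_def fA(2)
    by (simp add: bind_return_pmf)
qed

lemma feasible:
  assumes "valid_instance k W WA WB VA VB f"
  shows "\<forall>S \<in> set_pmf (protocol_output (alice_gen sf) bob0 k W WA WB VA VB f).
            S \<subseteq> VA \<union> VB \<and> card S \<le> k"
proof -
  have vi: "finite W" "VA \<subseteq> W" using assms unfolding valid_instance_def by auto
  have fA: "finite VA" "finite W" using finite_subset[OF vi(2) vi(1)] vi(1) by auto
  have VB: "VB \<subseteq> W" using assms unfolding valid_instance_def by auto
  have "finite ((msgset (sf k) k VA f \<union> VB) \<inter> W)" using fA by simp
  from best_spec[OF this, of k f]
  have b1: "best ((msgset (sf k) k VA f \<union> VB) \<inter> W) k f \<subseteq> (msgset (sf k) k VA f \<union> VB)"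
       and b2: "card (best ((msgset (sf k) k VA f \<union> VB) \<inter> W) k f) \<le> k" by auto
  have m: "msgset (sf k) k VA f \<subseteq> VA" using msgset_sub[OF fA(1)] .
  have "msgset (sf k) k VA f \<union> VB \<subseteq> VA \<union> VB" using m by (rule Un_mono) simp
  with b1 b2 have "best ((msgset (sf k) k VA f \<union> VB) \<inter> W) k f \<subseteq> VA \<union> VB \<and>
     card (best ((msgset (sf k) k VA f \<union> VB) \<inter> W) k f) \<le> k" by (meson subset_trans)
  note res = this
  show ?thesis
  proof
    fix S assume "S \<in> set_pmf (protocol_output (alice_gen sf) bob0 k W WA WB VA VB f)"
    then have "S = best ((msgset (sf k) k VA f \<union> VB) \<inter> W) k f"
      unfolding output_eq[OF assms] by simp
    then show "S \<subseteq> VA \<union> VB \<and> card S \<le> k" using res by simp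
  qed
qed


lemma ceil_mult:
  assumes "s \<ge> (1::nat)" "x > 0"
  shows "x \<le> s * ((x + (s - 1)) div s)" "s * ((x + (s - 1)) div s) \<le> x + (s - 1)"
        "(x + (s - 1)) div s \<ge> 1"
proof -
  have d: "(x + (s - 1)) = s * ((x + (s - 1)) div s) + (x + (s - 1)) mod s" by simp
  have m: "(x + (s - 1)) mod s < s" using assms by simp
  show "x \<le> s * ((x + (s - 1)) div s)" using d m by linarith
  show "s * ((x + (s - 1)) div s) \<le> x + (s - 1)" using d by linarith
  have "1 * s \<le> x + (s - 1)" using assms by simp
  then show "(x + (s - 1)) div s \<ge> 1" using assms by (simp add: less_eq_div_iff_mult_less_eq)
qed

lemma approx_gen:
  assumes vi: "valid_instance k W WA WB VA VB f" and s: "s \<ge> 1"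
  shows "2 * (1 - real (s - 1) / real k) * opt_value k (VA \<union> VB) f
           \<le> 3 * f (best ((msgset s k VA f \<union> VB) \<inter> W) k f)"
proof -
  have kpos: "k > 0" and fW: "finite W" and VAW: "VA \<subseteq> W" and VBW: "VB \<subseteq> W"
    and dis: "VA \<inter> VB = {}" and nms: "nonneg_monotone_submodular W f"
    using vi unfolding valid_instance_def by auto
  have fVA: "finite VA" by (rule finite_subset[OF VAW fW])
  define M where "M = msgset s k VA f"
  define U where "U = (M \<union> VB) \<inter> W"
  define T where "T = best U k f"
  have fU: "finite U" unfolding U_def using fW by simp
  have Tspec: "\<And>Y. Y \<subseteq> U \<Longrightarrow> card Y \<le> k \<Longrightarrow> f Y \<le> f T"
    using best_spec[OF fU, of k f] unfolding T_def by blast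
  let ?C = "{T. T \<subseteq> VA \<union> VB \<and> card T \<le> k}"
  have finC: "finite ?C"
  proof (rule finite_subset[of _ "Pow (VA \<union> VB)"])
    show "finite (Pow (VA \<union> VB))" using finite_subset[OF VBW fW] fVA by simp
  qed auto
  have neC: "?C \<noteq> {}" by (auto intro: exI[of _ "{}"])
  have "Max (f ` ?C) \<in> f ` ?C" using finC neC by (intro Max_in) auto
  then obtain Q where Q: "Q \<subseteq> VA \<union> VB" "card Q \<le> k" "f Q = opt_value k (VA \<union> VB) f"
    unfolding opt_value_def by auto
  have QW: "Q \<subseteq> W" using Q VAW VBW by auto
  have fQ: "finite Q" by (rule finite_subset[OF QW fW])
  have fQ0: "f Q \<ge> 0" using nms_nonneg[OF nms QW] .
  define n where "n = card Q"
  define m where "m = min n (k - (s - 1))"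
  have mn: "m \<le> n" unfolding m_def by simp
  have "n - m \<le> card Q" unfolding n_def by simp
  from dropj[OF nms fQ QW this]
  obtain Q' where Q': "Q' \<subseteq> Q" "card Q' = m" "real n * f Q' \<ge> real m * f Q"
    using mn unfolding n_def[symmetric] by (auto simp: diff_diff_cancel)
  have Q'W: "Q' \<subseteq> W" using Q' QW by auto
  have fQ'0: "f Q' \<ge> 0" using nms_nonneg[OF nms Q'W] .
  have key: "(1 - real (s - 1) / real k) * f Q \<le> f Q'"
  proof (cases "n = 0")
    case True
    then have "Q = {}" using fQ n_def by simp
    then have "Q' = {}" using Q' by auto
    then have "f Q' = f Q" using \<open>Q = {}\<close> by simp
    moreover have "(1 - real (s - 1) / real k) * f Q \<le> 1 * f Q"
      using fQ0 kpos by (intro mult_right_mono) auto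
    ultimately show ?thesis by simp
  next
    case False
    have nk: "n \<le> k" using Q n_def by simp
    have r: "real m / real n * f Q \<le> f Q'"
      using Q'(3) False by (simp add: divide_simps mult.commute)
    have "(1 - real (s - 1) / real k) \<le> real m / real n"
    proof (cases "m = n")
      case True then show ?thesis using False kpos by simp
    next
      case mneq: False
      then have mdef: "m = k - (s - 1)" unfolding m_def by (simp add: min_def split: if_splits)
      show ?thesis
      proof (cases "s - 1 \<le> k")
        case True
        then have "real m = real k - real (s - 1)" using mdef by (simp add: of_nat_diff)
        then have "1 - real (s - 1) / real k = real m / real k" using kpos by (simp add: field_simps)
        also have "\<dots> \<le> real m / real n" using False nk by (intro divide_left_mono) auto
        finally show ?thesis .
      next
        case nle: False
        then have "real (s - 1) / real k \<ge> 1" using kpos by simp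
        then show ?thesis by (smt (verit) divide_nonneg_nonneg of_nat_0_le_iff)
      qed
    qed
    then have "(1 - real (s - 1) / real k) * f Q \<le> real m / real n * f Q"
      using fQ0 by (intro mult_right_mono) auto
    then show ?thesis using r by linarith
  qed
  define A where "A = Q' \<inter> VA"
  define B where "B = Q' \<inter> VB"
  have QAB: "Q' = A \<union> B" using Q' Q unfolding A_def B_def by auto
  have fQ': "finite Q'" by (rule finite_subset[OF Q'W fW])
  have cardAB: "card A + card B = m"
  proof -
    have "card (A \<union> B) = card A + card B"
      by (rule card_Un_disjoint) (use fQ' dis in \<open>auto simp: A_def B_def\<close>)
    then show ?thesis using QAB Q' by simp
  qed
  have BU: "B \<subseteq> U" unfolding B_def U_def using VBW by auto
  have main: "2 * f Q' \<le> 3 * f T"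
  proof (cases "card A = 0")
    case True
    have "A = {}" using True fQ' unfolding A_def by simp
    then have "Q' = B" using QAB by simp
    moreover have "card B \<le> k" using cardAB mn Q n_def by simp
    ultimately have "f Q' \<le> f T" using Tspec BU by simp
    then show ?thesis using fQ'0 by simp
  next
    case False
    define i where "i = (card A + (s - 1)) div s"
    define a where "a = s * i"
    have ia: "card A \<le> a" "a \<le> card A + (s - 1)" "i \<ge> 1"
      using ceil_mult[OF s, of "card A"] False unfolding a_def i_def by auto
    have "m > 0" using cardAB False by simp
    then have "m \<le> k - (s - 1)" "k - (s - 1) > 0" unfolding m_def by auto
    then have aBk: "a + card B \<le> k" using ia cardAB by linarith
    have "s * i \<le> k" using aBk a_def by simp
    then have "i \<le> k div s" using s by (simp add: less_eq_div_iff_mult_less_eq mult.commute)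
    then have iI: "i \<in> {1..k div s}" using ia by simp
    have S1M: "S1 VA a f \<subseteq> M" and S2M: "S2 VA a f \<subseteq> M"
      unfolding M_def msgset_def a_def using iI by blast+
    have sp: "S1 VA a f \<subseteq> VA" "card (S1 VA a f) \<le> a" "S2 VA a f \<subseteq> VA" "card (S2 VA a f) \<le> a"
      using best_spec[OF fVA] unfolding S1_def S2_def by blast+
    have t1: "f (S1 VA a f \<union> B) \<le> f T"
    proof (rule Tspec)
      show "S1 VA a f \<union> B \<subseteq> U" using S1M sp VAW BU unfolding U_def by blast
      have "card (S1 VA a f \<union> B) \<le> card (S1 VA a f) + card B" by (rule card_Un_le)
      then show "card (S1 VA a f \<union> B) \<le> k" using sp aBk by linarith
    qed
    have t2: "f (S2 VA a f \<union> B) \<le> f T"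
    proof (rule Tspec)
      show "S2 VA a f \<union> B \<subseteq> U" using S2M sp VAW BU unfolding U_def by blast
      have "card (S2 VA a f \<union> B) \<le> card (S2 VA a f) + card B" by (rule card_Un_le)
      then show "card (S2 VA a f \<union> B) \<le> k" using sp aBk by linarith
    qed
    have "2 * f (A \<union> B) \<le> 3 * f T"
      by (rule two_thirds[OF nms fW VAW _ ia(1) _ t1 t2]) (use VBW in \<open>auto simp: A_def B_def\<close>)
    then show ?thesis using QAB by simp
  qed
  have "2 * (1 - real (s - 1) / real k) * opt_value k (VA \<union> VB) f
        = 2 * ((1 - real (s - 1) / real k) * f Q)" using Q by simp
  also have "\<dots> \<le> 2 * f Q'" using key by simp
  also have "\<dots> \<le> 3 * f T" using main .
  finally show ?thesis unfolding T_def U_def M_def .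
qed


lemma alice_msg:
  assumes vi: "valid_instance k W WA WB VA VB f" and s: "sf k \<ge> 1"
    and m: "m \<in> set_pmf (alice_gen sf k W WA WB VA f)"
  shows "set m \<subseteq> W \<and> real (length m) \<le> 2 * real k * real (k div sf k)"
proof -
  have v: "finite W" "VA \<subseteq> W" "VA \<subseteq> WA" using vi unfolding valid_instance_def by auto
  have fA: "finite VA" "VA \<inter> WA = VA" using finite_subset[OF v(2) v(1)] v(3) by auto
  have fM: "finite (msgset (sf k) k VA f)" by (rule finite_subset[OF msgset_sub[OF fA(1)] fA(1)])
  have meq: "m = sorted_list_of_set (msgset (sf k) k VA f)"
    using m unfolding alice_gen_def fA(2) by simp
  have "set m = msgset (sf k) k VA f" using meq fM by simp
  then have "set m \<subseteq> W" using msgset_sub[OF fA(1)] v(2) by blast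
  moreover have "length m = card (msgset (sf k) k VA f)" using meq by simp
  moreover have "card (msgset (sf k) k VA f) \<le> 2 * k * (k div sf k)" by (rule msgset_card[OF fA(1) s])
  ultimately show ?thesis
    by (metis of_nat_le_iff of_nat_mult of_nat_numeral)
qed

lemma opt_nonneg:
  assumes vi: "valid_instance k W WA WB VA VB f"
  shows "opt_value k (VA \<union> VB) f \<ge> 0"
proof -
  have v: "finite W" "VA \<subseteq> W" "VB \<subseteq> W" "nonneg_monotone_submodular W f"
    using vi unfolding valid_instance_def by auto
  let ?C = "{T. T \<subseteq> VA \<union> VB \<and> card T \<le> k}"
  have finC: "finite ?C"
  proof (rule finite_subset[of _ "Pow (VA \<union> VB)"])
    show "finite (Pow (VA \<union> VB))" using finite_subset[OF v(2) v(1)] finite_subset[OF v(3) v(1)] by simp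
  qed auto
  have "f {} \<in> f ` ?C" by (intro imageI) simp
  then have "f {} \<le> opt_value k (VA \<union> VB) f" unfolding opt_value_def using finC by (intro Max_ge) auto
  moreover have "f {} \<ge> 0" using nms_nonneg[OF v(4)] by simp
  ultimately show ?thesis by linarith
qed

lemma expect_eq:
  assumes vi: "valid_instance k W WA WB VA VB f"
  shows "measure_pmf.expectation (protocol_output (alice_gen sf) bob0 k W WA WB VA VB f) f
         = f (best ((msgset (sf k) k VA f \<union> VB) \<inter> W) k f)"
  unfolding output_eq[OF vi] by simp

theorem theorem1:
  shows "(\<exists>(C::real) (d::nat). \<forall>\<epsilon>::real. \<epsilon> > 0 \<longrightarrow>
            (\<exists>alice bob. is_protocol alice bob \<and>
               approx_guarantee alice bob (2/3 - \<epsilon>) \<and>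
               comm_bounded alice
                 (\<lambda>k. C * (real k / \<epsilon>) * (ln (real k + 1 / \<epsilon> + 1) + 1) ^ d)))
       \<and> (\<exists>(C::real) alice bob. is_protocol alice bob \<and>
            approx_guarantee alice bob (2/3) \<and>
            comm_bounded alice (\<lambda>k. C * (real k)^2))"
proof
  have prot: "is_protocol (alice_gen sf) bob0" for sf
    unfolding is_protocol_def using alice_ok bob_ok feasible by blast
  show "\<exists>(C::real) (d::nat). \<forall>\<epsilon>::real. \<epsilon> > 0 \<longrightarrow>
            (\<exists>alice bob. is_protocol alice bob \<and>
               approx_guarantee alice bob (2/3 - \<epsilon>) \<and>
               comm_bounded alice
                 (\<lambda>k. C * (real k / \<epsilon>) * (ln (real k + 1 / \<epsilon> + 1) + 1) ^ d))"
  proof (rule exI[of _ 2], rule exI[of _ 0], intro allI impI)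
    fix \<epsilon> :: real assume ep: "\<epsilon> > 0"
    define sf where "sf = (\<lambda>k::nat. nat \<lfloor>\<epsilon> * real k\<rfloor> + 1)"
    have sf1: "sf k \<ge> 1" for k unfolding sf_def by simp
    have sfr: "real (sf k - 1) \<le> \<epsilon> * real k" for k
    proof -
      have "real (sf k - 1) = real (nat \<lfloor>\<epsilon> * real k\<rfloor>)" unfolding sf_def by simp
      also have "\<dots> = of_int \<lfloor>\<epsilon> * real k\<rfloor>" using ep by simp
      also have "\<dots> \<le> \<epsilon> * real k" by simp
      finally show ?thesis .
    qed
    have sfg: "real (sf k) > \<epsilon> * real k" for k
    proof -
      have "real (sf k) = real (nat \<lfloor>\<epsilon> * real k\<rfloor>) + 1" unfolding sf_def by simp
      also have "\<dots> = of_int \<lfloor>\<epsilon> * real k\<rfloor> + 1" using ep by simp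
      finally show ?thesis by linarith
    qed
    have "approx_guarantee (alice_gen sf) bob0 (2/3 - \<epsilon>)"
      unfolding approx_guarantee_def
    proof (intro allI impI)
      fix k W WA WB VA VB f assume vi: "valid_instance k W WA WB VA VB f"
      have kpos: "k > 0" using vi unfolding valid_instance_def by simp
      define OPT where "OPT = opt_value k (VA \<union> VB) f"
      have O0: "OPT \<ge> 0" using opt_nonneg[OF vi] OPT_def by simp
      have ap: "2 * (1 - real (sf k - 1) / real k) * OPT \<le> 3 * f (best ((msgset (sf k) k VA f \<union> VB) \<inter> W) k f)"
        using approx_gen[OF vi sf1] OPT_def by simp
      have "real (sf k - 1) / real k \<le> \<epsilon>" using sfr[of k] kpos by (simp add: divide_simps mult.commute)
      then have "(2 - 3 * \<epsilon>) * OPT \<le> 2 * (1 - real (sf k - 1) / real k) * OPT"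
        using O0 ep by (intro mult_right_mono) auto
      then show "(2/3 - \<epsilon>) * opt_value k (VA \<union> VB) f \<le> measure_pmf.expectation (protocol_output (alice_gen sf) bob0 k W WA WB VA VB f) f"
      proof -
        have "(2/3 - \<epsilon>) * OPT = (2 - 3 * \<epsilon>) * OPT / 3" by (simp add: field_simps)
        then show ?thesis using ap \<open>(2 - 3 * \<epsilon>) * OPT \<le> _\<close>
          unfolding expect_eq[OF vi] OPT_def[symmetric] by linarith
      qed
    qed
    moreover have "comm_bounded (alice_gen sf) (\<lambda>k. 2 * (real k / \<epsilon>) * (ln (real k + 1 / \<epsilon> + 1) + 1) ^ 0)"
      unfolding comm_bounded_def
    proof (intro allI impI ballI)
      fix k W WA WB VA VB f m assume vi: "valid_instance k W WA WB VA VB f"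
        and m: "m \<in> set_pmf (alice_gen sf k W WA WB VA f)"
      have kpos: "k > 0" using vi unfolding valid_instance_def by simp
      have am: "set m \<subseteq> W \<and> real (length m) \<le> 2 * real k * real (k div sf k)"
        using alice_msg[OF vi sf1 m] .
      have "real (k div sf k) * real (sf k) \<le> real k"
        by (metis of_nat_le_iff of_nat_mult div_times_less_eq_dividend)
      moreover have "real (k div sf k) * (\<epsilon> * real k) \<le> real (k div sf k) * real (sf k)"
        using sfg[of k] by (intro mult_left_mono) auto
      ultimately have "real (k div sf k) * \<epsilon> * real k \<le> 1 * real k" by (simp add: mult.assoc)
      then have "real (k div sf k) * \<epsilon> \<le> 1" using kpos by (simp only: mult_le_cancel_right)
      then have q: "real (k div sf k) \<le> 1 / \<epsilon>" using ep by (simp add: field_simps)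
      have "2 * real k * real (k div sf k) \<le> 2 * real k * (1 / \<epsilon>)"
        using q by (intro mult_left_mono) auto
      then show "set m \<subseteq> W \<and> real (length m) \<le> 2 * (real k / \<epsilon>) * (ln (real k + 1 / \<epsilon> + 1) + 1) ^ 0"
        using am by simp
    qed
    ultimately show "\<exists>alice bob. is_protocol alice bob \<and>
               approx_guarantee alice bob (2/3 - \<epsilon>) \<and>
               comm_bounded alice
                 (\<lambda>k. 2 * (real k / \<epsilon>) * (ln (real k + 1 / \<epsilon> + 1) + 1) ^ 0)"
      using prot by blast
  qed
  have "approx_guarantee (alice_gen (\<lambda>_. 1)) bob0 (2/3)"
    unfolding approx_guarantee_def
  proof (intro allI impI)
    fix k W WA WB VA VB f assume vi: "valid_instance k W WA WB VA VB f"
    have "2 * (1 - real (1 - 1) / real k) * opt_value k (VA \<union> VB) f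
           \<le> 3 * f (best ((msgset 1 k VA f \<union> VB) \<inter> W) k f)"
      using approx_gen[OF vi, of 1] by simp
    then show "2 / 3 * opt_value k (VA \<union> VB) f \<le> measure_pmf.expectation (protocol_output (alice_gen (\<lambda>_. 1)) bob0 k W WA WB VA VB f) f"
      unfolding expect_eq[OF vi] by simp
  qed
  moreover have "comm_bounded (alice_gen (\<lambda>_. 1)) (\<lambda>k. 2 * (real k)^2)"
    unfolding comm_bounded_def
  proof (intro allI impI ballI)
    fix k W WA WB VA VB f m assume vi: "valid_instance k W WA WB VA VB f"
      and m: "m \<in> set_pmf (alice_gen (\<lambda>_. 1) k W WA WB VA f)"
    have "set m \<subseteq> W \<and> real (length m) \<le> 2 * real k * real (k div 1)"
      using alice_msg[OF vi _ m] by simp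
    then show "set m \<subseteq> W \<and> real (length m) \<le> 2 * (real k)^2" by (simp add: power2_eq_square)
  qed
  ultimately show "\<exists>(C::real) alice bob. is_protocol alice bob \<and>
            approx_guarantee alice bob (2/3) \<and>
            comm_bounded alice (\<lambda>k. C * (real k)^2)"
    using prot[of "\<lambda>_. 1"] by blast
qed

end
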